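(* For $C\in\mathbb D$, $$C^\beta=\{c\in\mathcal S: c\circ\bar K_C(z,\partial_z)=0\},$$ where $\bar K_C(z,\partial_z)$ is $\bar K_C$ with $x$ replaced by $z$ and $c\circ\bar K_C(z,\partial_z)$ is the distribution $u\mapsto c(\bar K_C(z,\partial_z)u)$.
   Context: Fix an integer $r>1$ and constants $a_1,\dots,a_{r-2}\in\mathbb C$, and let $L_0=\partial^r-a_{r-2}\partial^{r-2}-\cdots-a_1\partial-x$, where $\partial=d/dx$. Fix a basis $f_1,\dots,f_r$ of $\ker L_0$ normalized so that $|Wr(f_1,\dots,f_r)|=1$. For a function $f$ of one variable write $\hat f(x,z)=f(x+z)$. $\mathcal S$ denotes the space of finitely supported distributions in the $z$-plane: finite linear combinations of $\delta_\lambda\circ\partial_z^j$, where $\delta_\lambda$ evaluates its argument at $z=\lambda$; applied to a function of $(x,z)$ such a distribution acts in $z$ and yields a function of $x$. $\mathbb D$ is the set of finite-dimensional subspaces $C\subset\mathcal S$ having a basis $c_i=\delta_{\lambda_i}\circ(\partial_z+\gamma_i)$, $i=1,\dots,n$ ($n\ge1$), with $\lambda_i$ pairwise distinct and $\gamma_i\in\mathbb C$. For $C\in\mathbb D$ put $N=rn$, let $\phi_1,\dots,\phi_N$ be the functions $c_i(\hat f_j)$, and let $\bar K_C$ be the operator $u\mapsto\kappa\,|Wr(\phi_1,\dots,\phi_N,u)|$ with $\kappa$ the nonzero constant making the coefficient of $\partial^N$ a monic polynomial (it has polynomial coefficients); $Wr(v_1,\dots,v_m)$ is the matrix with first row $(v_1,\dots,v_m)$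 and each subsequent row the derivative of the previous. $\flat$ is the unique $\mathbb C$-linear anti-automorphism of the Weyl algebra $\mathbb C[x]\langle\partial\rangle$ with $x^\flat=L_0$, $\partial^\flat=\partial$ (equivalently $T(x,\partial_x)\hat f(x,z)=T^\flat(z,\partial_z)\hat f(x,z)$ for all $f\in\ker L_0$). $C^\beta:=\{c\in\mathcal S: c(\hat f)\in\ker\bar K_C^\flat\text{ for all }f\in\ker L_0\}$. *)

theory Defs
  imports "HOL-Analysis.Analysis" "HOL-Computational_Algebra.Polynomial"
begin

definition detm :: "nat \<Rightarrow> (nat \<Rightarrow> nat \<Rightarrow> complex) \<Rightarrow> complex" where
  "detm m A = (\<Sum>p | p permutes {..<m}. of_int (sign p) * (\<Prod>i<m. A i (p i)))"

definition wronskian :: "nat \<Rightarrow> (nat \<Rightarrow> complex \<Rightarrow> complex) \<Rightarrow> complex \<Rightarrow> complex" where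
  "wronskian m v x = detm m (\<lambda>i j. (deriv ^^ i) (v j) x)"

(* Finitely supported distributions in the z-plane: c (lambda, j) is the coefficient
   of delta_lambda o d_z^j. *)
type_synonym fdist = "complex \<times> nat \<Rightarrow> complex"

definition Sdist :: "fdist set" where
  "Sdist = {c. finite {p. c p \<noteq> 0}}"

definition dapp :: "fdist \<Rightarrow> (complex \<Rightarrow> complex) \<Rightarrow> complex" where
  "dapp c g = (\<Sum>p\<in>{p. c p \<noteq> 0}. c p * (deriv ^^ snd p) g (fst p))"

(* delta_lambda o (d_z + gamma) *)
definition cop :: "complex \<Rightarrow> complex \<Rightarrow> fdist" where
  "cop lam gam = (\<lambda>p. if p = (lam, 1) then 1 else if p = (lam, 0) then gam else 0)"

definition L0 :: "nat \<Rightarrow> (nat \<Rightarrow> complex) \<Rightarrow> (complex \<Rightarrow> complex) \<Rightarrow> complex \<Rightarrow> complex" where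
  "L0 r a u = (\<lambda>x. (deriv ^^ r) u x - (\<Sum>k\<in>{1..r-2}. a k * (deriv ^^ k) u x) - x * u x)"

definition kerL0 :: "nat \<Rightarrow> (nat \<Rightarrow> complex) \<Rightarrow> (complex \<Rightarrow> complex) set" where
  "kerL0 r a = {f. f holomorphic_on UNIV \<and> (\<forall>x. L0 r a f x = 0)}"

(* phi_m = c_i(hat f_j), m = i*r + j *)
definition phiC :: "nat \<Rightarrow> (nat \<Rightarrow> complex \<Rightarrow> complex) \<Rightarrow> (nat \<Rightarrow> complex) \<Rightarrow> (nat \<Rightarrow> complex)
    \<Rightarrow> nat \<Rightarrow> complex \<Rightarrow> complex" where
  "phiC r f lam gam m = (\<lambda>x. dapp (cop (lam (m div r)) (gam (m div r))) (\<lambda>z. f (m mod r) (x + z)))"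

(* Coefficient of u^(k) in |Wr(phi_0,...,phi_{N-1},u)| (linearity in the last column) *)
definition wrcoeff :: "nat \<Rightarrow> (nat \<Rightarrow> complex \<Rightarrow> complex) \<Rightarrow> nat \<Rightarrow> complex \<Rightarrow> complex" where
  "wrcoeff N phi k x = detm (Suc N)
     (\<lambda>i j. if j < N then (deriv ^^ i) (phi j) x else if i = k then 1 else 0)"

definition kappa :: "nat \<Rightarrow> (nat \<Rightarrow> complex \<Rightarrow> complex) \<Rightarrow> complex" where
  "kappa N phi = (THE \<kappa>. \<kappa> \<noteq> 0 \<and>
     (\<exists>p. lead_coeff p = 1 \<and> (\<forall>x. poly p x = \<kappa> * wrcoeff N phi N x)))"

(* polynomial coefficients of Kbar_C = sum_{k<=N} P k (x) d^k *)
definition Kbar :: "nat \<Rightarrow> (nat \<Rightarrow> complex \<Rightarrow> complex) \<Rightarrow> (nat \<Rightarrow> complex) \<Rightarrow> (nat \<Rightarrow> complex)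
    \<Rightarrow> nat \<Rightarrow> nat \<Rightarrow> complex poly" where
  "Kbar r f lam gam n k = (let N = r * n; phi = phiC r f lam gam in
     (THE p. \<forall>x. poly p x = kappa N phi * wrcoeff N phi k x))"

definition opapp :: "(nat \<Rightarrow> complex poly) \<Rightarrow> nat \<Rightarrow> (complex \<Rightarrow> complex) \<Rightarrow> complex \<Rightarrow> complex" where
  "opapp P N u = (\<lambda>x. \<Sum>k\<le>N. poly (P k) x * (deriv ^^ k) u x)"

definition polyL0 :: "nat \<Rightarrow> (nat \<Rightarrow> complex) \<Rightarrow> complex poly \<Rightarrow> (complex \<Rightarrow> complex) \<Rightarrow> complex \<Rightarrow> complex" where
  "polyL0 r a p u = (\<lambda>x. \<Sum>j\<le>degree p. coeff p j * ((L0 r a) ^^ j) u x)"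

(* flat: the anti-automorphism x |-> L_0, d |-> d, so
   (sum_k P_k(x) d^k)^flat = sum_k d^k o P_k(L_0); here its action on a function *)
definition flatapp :: "nat \<Rightarrow> (nat \<Rightarrow> complex) \<Rightarrow> (nat \<Rightarrow> complex poly) \<Rightarrow> nat
    \<Rightarrow> (complex \<Rightarrow> complex) \<Rightarrow> complex \<Rightarrow> complex" where
  "flatapp r a P N u = (\<lambda>x. \<Sum>k\<le>N. (deriv ^^ k) (polyL0 r a (P k) u) x)"

end

theory Submission
  imports Defs "HOL-Complex_Analysis.Cauchy_Integral_Formula"
begin

definition supp :: "fdist \<Rightarrow> (complex \<times> nat) set" where
  "supp e = {p. e p \<noteq> 0}"

definition ev :: "fdist \<Rightarrow> (nat \<Rightarrow> complex \<Rightarrow> complex) \<Rightarrow> complex" where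
  "ev e H = (\<Sum>p\<in>supp e. e p * H (snd p) (fst p))"

definition mulz :: "fdist \<Rightarrow> fdist" where
  "mulz e = (\<lambda>p. fst p * e p + of_nat (Suc (snd p)) * e (fst p, Suc (snd p)))"

definition shift1 :: "fdist \<Rightarrow> fdist" where
  "shift1 e = (\<lambda>p. if snd p = 0 then 0 else e (fst p, snd p - 1))"

definition compP :: "complex poly \<Rightarrow> fdist \<Rightarrow> fdist" where
  "compP p e = (\<lambda>q. \<Sum>i\<le>degree p. coeff p i * (mulz ^^ i) e q)"

lemma dapp_ev: "dapp e G = ev e (\<lambda>j l. (deriv ^^ j) G l)"
  unfolding dapp_def ev_def supp_def by simp

lemma ev_superset:
  assumes "finite S" "supp e \<subseteq> S"
  shows "ev e H = (\<Sum>p\<in>S. e p * H (snd p) (fst p))"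
  unfolding ev_def
  by (rule sum.mono_neutral_left) (use assms in \<open>auto simp: supp_def\<close>)

lemma fin_sum:
  assumes "finite I" "\<And>i. i \<in> I \<Longrightarrow> finite (supp (E i))"
  shows "finite (supp (\<lambda>q. \<Sum>i\<in>I. E i q))"
proof -
  have "supp (\<lambda>q. \<Sum>i\<in>I. E i q) \<subseteq> (\<Union>i\<in>I. supp (E i))"
    by (auto simp: supp_def intro: ccontr dest: sum.neutral)
  thus ?thesis using assms by (meson finite_UN_I finite_subset)
qed

lemma ev_sum:
  assumes "finite I" "\<And>i. i \<in> I \<Longrightarrow> finite (supp (E i))"
  shows "ev (\<lambda>q. \<Sum>i\<in>I. E i q) H = (\<Sum>i\<in>I. ev (E i) H)"
proof -
  let ?S = "\<Union>i\<in>I. supp (E i)"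
  have fS: "finite ?S" using assms by auto
  have s1: "supp (\<lambda>q. \<Sum>i\<in>I. E i q) \<subseteq> ?S"
    by (auto simp: supp_def intro: ccontr dest: sum.neutral)
  have "ev (\<lambda>q. \<Sum>i\<in>I. E i q) H = (\<Sum>p\<in>?S. (\<Sum>i\<in>I. E i p) * H (snd p) (fst p))"
    by (rule ev_superset[OF fS s1])
  also have "\<dots> = (\<Sum>i\<in>I. \<Sum>p\<in>?S. E i p * H (snd p) (fst p))"
    by (simp add: sum_distrib_right sum.swap[of _ I])
  also have "\<dots> = (\<Sum>i\<in>I. ev (E i) H)"
    by (rule sum.cong[OF refl], rule ev_superset[symmetric, OF fS]) (use assms in auto)
  finally show ?thesis .
qed

lemma ev_add:
  assumes "finite (supp e1)" "finite (supp e2)"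
  shows "ev (\<lambda>q. e1 q + e2 q) H = ev e1 H + ev e2 H"
  using ev_sum[of "{True,False}" "\<lambda>b. if b then e1 else e2" H] assms by simp

lemma ev_scale:
  shows "ev (\<lambda>q. s * e q) H = s * ev e H"
proof (cases "s = 0")
  case True thus ?thesis by (simp add: ev_def supp_def)
next
  case False
  hence "supp (\<lambda>q. s * e q) = supp e" by (auto simp: supp_def)
  thus ?thesis by (simp add: ev_def sum_distrib_left mult.assoc)
qed

lemma ev_linH:
  assumes "finite I"
  shows "ev e (\<lambda>j l. \<Sum>i\<in>I. s i * H i j l) = (\<Sum>i\<in>I. s i * ev e (H i))"
  unfolding ev_def by (simp add: sum_distrib_left sum.swap[of _ I] mult.left_commute)

lemma ev_cong: "(\<And>p. p \<in> supp e \<Longrightarrow> H1 (snd p) (fst p) = H2 (snd p) (fst p)) \<Longrightarrow> ev e H1 = ev e H2"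
  unfolding ev_def by (rule sum.cong) auto

lemma box:
  assumes "finite (supp e)"
  obtains m where "supp e \<subseteq> fst ` supp e \<times> {..<Suc m}"
proof -
  obtain k where "snd ` supp e \<subseteq> {..<k}" using finite_nat_bounded assms by blast
  hence "supp e \<subseteq> fst ` supp e \<times> {..<Suc k}" by force
  thus ?thesis using that by blast
qed

lemma fin_mulz:
  assumes "finite (supp e)" shows "finite (supp (mulz e))"
proof -
  have "supp (mulz e) \<subseteq> supp e \<union> (\<lambda>q. (fst q, snd q - 1)) ` supp e"
  proof
    fix p assume "p \<in> supp (mulz e)"
    hence "e p \<noteq> 0 \<or> e (fst p, Suc (snd p)) \<noteq> 0" by (auto simp: supp_def mulz_def)
    thus "p \<in> supp e \<union> (\<lambda>q. (fst q, snd q - 1)) ` supp e"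
      by (cases p) (auto simp: supp_def intro!: image_eqI[of _ _ "(fst p, Suc (snd p))"])
  qed
  thus ?thesis using assms by (meson finite_Un finite_imageI finite_subset)
qed

lemma fin_shift1:
  assumes "finite (supp e)" shows "finite (supp (shift1 e))"
proof -
  have "supp (shift1 e) \<subseteq> (\<lambda>q. (fst q, Suc (snd q))) ` supp e"
  proof
    fix p assume "p \<in> supp (shift1 e)"
    thus "p \<in> (\<lambda>q. (fst q, Suc (snd q))) ` supp e"
      by (cases p) (auto simp: supp_def shift1_def split: if_splits
               intro!: image_eqI[of _ _ "(fst p, snd p - 1)"])
  qed
  thus ?thesis using assms by (meson finite_imageI finite_subset)
qed

lemma fin_mulz_pow: "finite (supp e) \<Longrightarrow> finite (supp ((mulz ^^ i) e))"
  by (induction i) (auto intro: fin_mulz)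

lemma fin_shift_pow: "finite (supp e) \<Longrightarrow> finite (supp ((shift1 ^^ i) e))"
  by (induction i) (auto intro: fin_shift1)

lemma fin_compP: "finite (supp e) \<Longrightarrow> finite (supp (compP p e))"
  unfolding compP_def
  by (rule fin_sum) (auto simp: supp_def intro: finite_subset[OF _ fin_mulz_pow])

lemma ev_box:
  assumes "finite L" "supp e \<subseteq> L \<times> {..<M}"
  shows "ev e H = (\<Sum>l\<in>L. \<Sum>j<M. e (l, j) * H j l)"
  by (subst ev_superset[OF _ assms(2)]) (use assms(1) in \<open>auto simp: sum.cartesian_product split_beta intro!: sum.cong\<close>)

lemma ev_mulz:
  assumes "finite (supp e)"
  shows "ev (mulz e) H = ev e (\<lambda>j l. l * H j l + of_nat j * H (j - 1) l)"
proof -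
  obtain m where m: "supp e \<subseteq> fst ` supp e \<times> {..<Suc m}" using box assms by blast
  let ?L = "fst ` supp e"
  have fL: "finite ?L" using assms by auto
  have m2: "supp (mulz e) \<subseteq> ?L \<times> {..<Suc m}"
  proof
    fix p assume "p \<in> supp (mulz e)"
    hence "e p \<noteq> 0 \<or> e (fst p, Suc (snd p)) \<noteq> 0" by (auto simp: supp_def mulz_def)
    thus "p \<in> ?L \<times> {..<Suc m}"
    proof
      assume "e p \<noteq> 0" thus ?thesis using m by (auto simp: supp_def)
    next
      assume "e (fst p, Suc (snd p)) \<noteq> 0"
      hence "(fst p, Suc (snd p)) \<in> supp e" by (simp add: supp_def)
      with m show ?thesis by (cases p) force
    qed
  qed
  have z: "e (l, Suc m) = 0" for l using m by (auto simp: supp_def)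
  have "ev (mulz e) H = (\<Sum>l\<in>?L. \<Sum>j<Suc m. mulz e (l, j) * H j l)"
    by (rule ev_box[OF fL m2])
  also have "\<dots> = (\<Sum>l\<in>?L. \<Sum>j<Suc m. e (l, j) * (l * H j l + of_nat j * H (j - 1) l))"
  proof (rule sum.cong[OF refl])
    fix l
    have 1: "(\<Sum>j<Suc m. of_nat (Suc j) * e (l, Suc j) * H j l)
          = (\<Sum>j<Suc m. e (l, j) * (of_nat j * H (j - 1) l))"
    proof -
      have a: "(\<Sum>j<Suc m. e (l, j) * (of_nat j * H (j - 1) l))
           = (\<Sum>i<m. e (l, Suc i) * (of_nat (Suc i) * H i l))"
        by (simp only: sum.lessThan_Suc_shift) simp
      have b: "(\<Sum>j<Suc m. of_nat (Suc j) * e (l, Suc j) * H j l)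
           = (\<Sum>i<m. of_nat (Suc i) * e (l, Suc i) * H i l)"
        by (simp only: sum.lessThan_Suc) (simp add: z)
      show ?thesis unfolding a b by (rule sum.cong) (auto simp: algebra_simps)
    qed
    show "(\<Sum>j<Suc m. mulz e (l, j) * H j l) = (\<Sum>j<Suc m. e (l, j) * (l * H j l + of_nat j * H (j - 1) l))"
      using 1 by (simp add: mulz_def algebra_simps sum.distrib)
  qed
  also have "\<dots> = ev e (\<lambda>j l. l * H j l + of_nat j * H (j - 1) l)"
    by (rule ev_box[symmetric, OF fL m])
  finally show ?thesis .
qed

lemma ev_shift1:
  assumes "finite (supp e)"
  shows "ev (shift1 e) H = ev e (\<lambda>j l. H (Suc j) l)"
proof -
  obtain m where m: "supp e \<subseteq> fst ` supp e \<times> {..<Suc m}" using box assms by blast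
  let ?L = "fst ` supp e"
  have fL: "finite ?L" using assms by auto
  have m2: "supp (shift1 e) \<subseteq> ?L \<times> {..<Suc (Suc m)}"
  proof
    fix p assume "p \<in> supp (shift1 e)"
    hence "snd p \<noteq> 0" "(fst p, snd p - 1) \<in> supp e" by (auto simp: supp_def shift1_def split: if_splits)
    with m show "p \<in> ?L \<times> {..<Suc (Suc m)}" by (cases p) force
  qed
  have "ev (shift1 e) H = (\<Sum>l\<in>?L. \<Sum>j<Suc (Suc m). shift1 e (l, j) * H j l)"
    by (rule ev_box[OF fL m2])
  also have "\<dots> = (\<Sum>l\<in>?L. \<Sum>j<Suc m. e (l, j) * H (Suc j) l)"
    by (simp only: sum.lessThan_Suc_shift) (simp add: shift1_def)
  also have "\<dots> = ev e (\<lambda>j l. H (Suc j) l)"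
    by (rule ev_box[symmetric, OF fL m])
  finally show ?thesis .
qed

lemma ev_shift_pow:
  assumes "finite (supp e)"
  shows "ev ((shift1 ^^ k) e) H = ev e (\<lambda>j l. H (j + k) l)"
  using assms
proof (induction k arbitrary: H)
  case 0 thus ?case by simp
next
  case (Suc k)
  have "ev ((shift1 ^^ Suc k) e) H = ev ((shift1 ^^ k) e) (\<lambda>j l. H (Suc j) l)"
    using ev_shift1[OF fin_shift_pow[OF Suc.prems]] by simp
  also have "\<dots> = ev e (\<lambda>j l. H (j + Suc k) l)" using Suc by simp
  finally show ?case .
qed

lemma ev_compP:
  assumes "finite (supp e)"
  shows "ev (compP p e) H = (\<Sum>i\<le>degree p. coeff p i * ev ((mulz ^^ i) e) H)"
  unfolding compP_def
  by (subst ev_sum) (auto simp: ev_scale supp_def intro: finite_subset[OF _ fin_mulz_pow[OF assms]])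

lemma ent_hd: "G holomorphic_on UNIV \<Longrightarrow> (deriv ^^ j) G holomorphic_on UNIV"
  by (rule holomorphic_higher_deriv) auto

lemma hd_deriv: "G holomorphic_on UNIV \<Longrightarrow> ((deriv ^^ j) G has_field_derivative (deriv ^^ Suc j) G z) (at z)"
proof -
  assume "G holomorphic_on UNIV"
  hence "(deriv ^^ j) G holomorphic_on UNIV" by (rule ent_hd)
  from holomorphic_derivI[OF this open_UNIV UNIV_I, of z UNIV] show ?thesis by simp
qed

lemma hd_shift:
  assumes "g holomorphic_on UNIV"
  shows "(deriv ^^ j) (\<lambda>z. g (y + z)) = (\<lambda>z. (deriv ^^ j) g (y + z))"
proof (induction j)
  case 0 thus ?case by simp
next
  case (Suc j)
  have "deriv (\<lambda>z. (deriv ^^ j) g (y + z)) z = (deriv ^^ Suc j) g (y + z)" for z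
  proof -
    have "((\<lambda>x. (deriv ^^ j) g (x + y)) has_field_derivative (deriv ^^ Suc j) g (z + y)) (at z)"
      using hd_deriv[OF assms, of j "z + y"] DERIV_shift by blast
    thus ?thesis by (intro DERIV_imp_deriv) (simp add: add.commute)
  qed
  thus ?case using Suc by auto
qed

lemma hd_zmult:
  assumes "G holomorphic_on UNIV"
  shows "(deriv ^^ j) (\<lambda>z. z * G z) = (\<lambda>z. z * (deriv ^^ j) G z + of_nat j * (deriv ^^ (j - 1)) G z)"
proof (induction j)
  case 0 thus ?case by simp
next
  case (Suc j)
  have "deriv (\<lambda>z. z * (deriv ^^ j) G z + of_nat j * (deriv ^^ (j - 1)) G z) z
      = z * (deriv ^^ Suc j) G z + of_nat (Suc j) * (deriv ^^ j) G z" for z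
  proof -
    have "((\<lambda>z. z * (deriv ^^ j) G z + of_nat j * (deriv ^^ (j - 1)) G z) has_field_derivative
          (1 * (deriv ^^ j) G z + (deriv ^^ Suc j) G z * z) + of_nat j * (deriv ^^ Suc (j - 1)) G z) (at z)"
      by (intro DERIV_add DERIV_mult DERIV_cmult DERIV_ident hd_deriv assms)
    hence "deriv (\<lambda>z. z * (deriv ^^ j) G z + of_nat j * (deriv ^^ (j - 1)) G z) z
       = (1 * (deriv ^^ j) G z + (deriv ^^ Suc j) G z * z) + of_nat j * (deriv ^^ Suc (j - 1)) G z"
      by (rule DERIV_imp_deriv)
    also have "\<dots> = z * (deriv ^^ Suc j) G z + of_nat (Suc j) * (deriv ^^ j) G z"
      by (cases j) (simp_all add: algebra_simps)
    finally show ?thesis .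
  qed
  thus ?case using Suc by auto
qed

lemma hd_sum:
  assumes "finite I" "\<And>i. i \<in> I \<Longrightarrow> G i holomorphic_on UNIV"
  shows "(deriv ^^ j) (\<lambda>z. \<Sum>i\<in>I. s i * G i z) = (\<lambda>z. \<Sum>i\<in>I. s i * (deriv ^^ j) (G i) z)"
proof (induction j)
  case 0 thus ?case by simp
next
  case (Suc j)
  have "deriv (\<lambda>z. \<Sum>i\<in>I. s i * (deriv ^^ j) (G i) z) z = (\<Sum>i\<in>I. s i * (deriv ^^ Suc j) (G i) z)" for z
  proof -
    have "((\<lambda>z. \<Sum>i\<in>I. s i * (deriv ^^ j) (G i) z) has_field_derivative
           (\<Sum>i\<in>I. s i * (deriv ^^ Suc j) (G i) z)) (at z)"
      by (rule DERIV_sum, rule DERIV_cmult, rule hd_deriv, rule assms) auto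
    thus ?thesis by (rule DERIV_imp_deriv)
  qed
  thus ?case using Suc by auto
qed

lemma ent_sum: "finite I \<Longrightarrow> (\<And>i. i \<in> I \<Longrightarrow> G i holomorphic_on UNIV) \<Longrightarrow>
   (\<lambda>z. \<Sum>i\<in>I. s i * G i z) holomorphic_on UNIV"
  by (intro holomorphic_intros) auto

definition Dg :: "fdist \<Rightarrow> (complex \<Rightarrow> complex) \<Rightarrow> complex \<Rightarrow> complex" where
  "Dg e g = (\<lambda>y. ev e (\<lambda>j l. (deriv ^^ j) g (y + l)))"

lemma dapp_shift: "g holomorphic_on UNIV \<Longrightarrow> dapp e (\<lambda>z. g (y + z)) = Dg e g y"
  by (simp add: dapp_ev hd_shift Dg_def)

lemma hd_deriv_sh: "g holomorphic_on UNIV \<Longrightarrow>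
   ((\<lambda>y. (deriv ^^ m) g (y + l)) has_field_derivative (deriv ^^ Suc m) g (y + l)) (at y)"
  using hd_deriv[of g m "y + l"] DERIV_shift by blast

lemma Dg_deriv:
  assumes "g holomorphic_on UNIV"
  shows "(deriv ^^ k) (Dg e g) = (\<lambda>y. ev e (\<lambda>j l. (deriv ^^ (j + k)) g (y + l)))"
proof (induction k)
  case 0 thus ?case by (simp add: Dg_def)
next
  case (Suc k)
  have "deriv (\<lambda>y. ev e (\<lambda>j l. (deriv ^^ (j + k)) g (y + l))) y
      = ev e (\<lambda>j l. (deriv ^^ (j + Suc k)) g (y + l))" for y
  proof -
    have "((\<lambda>y. \<Sum>p\<in>supp e. e p * (deriv ^^ (snd p + k)) g (y + fst p)) has_field_derivative
          (\<Sum>p\<in>supp e. e p * (deriv ^^ Suc (snd p + k)) g (y + fst p))) (at y)"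
      by (rule DERIV_sum, rule DERIV_cmult, rule hd_deriv_sh, rule assms)
    thus ?thesis unfolding ev_def by (simp add: DERIV_imp_deriv)
  qed
  thus ?case using Suc by auto
qed

lemma ode_shift:
  assumes "g \<in> kerL0 r a"
  shows "(deriv ^^ (j + r)) g y - (\<Sum>k\<in>{1..r-2}. a k * (deriv ^^ (j + k)) g y)
       = y * (deriv ^^ j) g y + of_nat j * (deriv ^^ (j - 1)) g y"
proof (induction j arbitrary: y)
  case 0
  from assms have "L0 r a g y = 0" by (simp add: kerL0_def)
  thus ?case by (simp add: L0_def)
next
  case (Suc j)
  have hol: "g holomorphic_on UNIV" using assms by (simp add: kerL0_def)
  let ?F = "\<lambda>y. ((deriv ^^ (j + r)) g y - (\<Sum>k\<in>{1..r-2}. a k * (deriv ^^ (j + k)) g y))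
       - (y * (deriv ^^ j) g y + of_nat j * (deriv ^^ (j - 1)) g y)"
  have F0: "?F = (\<lambda>_. 0)" using Suc.IH by auto
  have "(?F has_field_derivative
     ((deriv ^^ Suc (j + r)) g y - (\<Sum>k\<in>{1..r-2}. a k * (deriv ^^ Suc (j + k)) g y))
       - ((1 * (deriv ^^ j) g y + (deriv ^^ Suc j) g y * y) + of_nat j * (deriv ^^ Suc (j - 1)) g y)) (at y)"
    by (intro DERIV_diff DERIV_add DERIV_sum DERIV_mult DERIV_cmult DERIV_ident hd_deriv hol)
  moreover have "(?F has_field_derivative 0) (at y)" unfolding F0 by simp
  ultimately have "((deriv ^^ Suc (j + r)) g y - (\<Sum>k\<in>{1..r-2}. a k * (deriv ^^ Suc (j + k)) g y))
       - ((1 * (deriv ^^ j) g y + (deriv ^^ Suc j) g y * y) + of_nat j * (deriv ^^ Suc (j - 1)) g y) = 0"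
    using DERIV_unique by blast
  moreover have "of_nat j * (deriv ^^ Suc (j - 1)) g y = of_nat j * (deriv ^^ j) g y" by (cases j) auto
  ultimately show ?case by (simp add: algebra_simps)
qed

lemma L0_Dg:
  assumes "g \<in> kerL0 r a" "finite (supp e)"
  shows "L0 r a (Dg e g) y = Dg (mulz e) g y"
proof -
  have hol: "g holomorphic_on UNIV" using assms by (simp add: kerL0_def)
  have "L0 r a (Dg e g) y = ev e (\<lambda>j l. (deriv ^^ (j + r)) g (y + l))
      - (\<Sum>k\<in>{1..r-2}. a k * ev e (\<lambda>j l. (deriv ^^ (j + k)) g (y + l)))
      - y * ev e (\<lambda>j l. (deriv ^^ j) g (y + l))"
    by (simp add: L0_def Dg_deriv[OF hol]) (simp add: Dg_def)
  also have "\<dots> = ev e (\<lambda>j l. (deriv ^^ (j + r)) g (y + l)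
      - (\<Sum>k\<in>{1..r-2}. a k * (deriv ^^ (j + k)) g (y + l)) - y * (deriv ^^ j) g (y + l))"
    unfolding ev_def
    by (simp add: sum_subtractf sum_distrib_left right_diff_distrib mult.left_commute)
       (rule sum.swap)
  also have "\<dots> = ev e (\<lambda>j l. l * (deriv ^^ j) g (y + l) + of_nat j * (deriv ^^ (j - 1)) g (y + l))"
  proof (rule ev_cong)
    fix p :: "complex \<times> nat"
    have "(deriv ^^ (snd p + r)) g (y + fst p) - (\<Sum>k\<in>{1..r-2}. a k * (deriv ^^ (snd p + k)) g (y + fst p))
       = (y + fst p) * (deriv ^^ snd p) g (y + fst p) + of_nat (snd p) * (deriv ^^ (snd p - 1)) g (y + fst p)"
      by (rule ode_shift[OF assms(1)])
    thus "(deriv ^^ (snd p + r)) g (y + fst p) - (\<Sum>k\<in>{1..r-2}. a k * (deriv ^^ (snd p + k)) g (y + fst p))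
        - y * (deriv ^^ snd p) g (y + fst p)
      = fst p * (deriv ^^ snd p) g (y + fst p) + of_nat (snd p) * (deriv ^^ (snd p - 1)) g (y + fst p)"
      by (simp add: algebra_simps)
  qed
  also have "\<dots> = Dg (mulz e) g y"
    by (simp add: Dg_def ev_mulz[OF assms(2)])
  finally show ?thesis .
qed

lemma L0_pow:
  assumes "g \<in> kerL0 r a" "finite (supp e)"
  shows "(L0 r a ^^ i) (Dg e g) = Dg ((mulz ^^ i) e) g"
proof (induction i)
  case 0 thus ?case by simp
next
  case (Suc i)
  show ?case using L0_Dg[OF assms(1) fin_mulz_pow[OF assms(2)], of i] Suc by auto
qed

lemma polyL0_Dg:
  assumes "g \<in> kerL0 r a" "finite (supp e)"
  shows "polyL0 r a p (Dg e g) = Dg (compP p e) g"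
  apply (rule ext)
  apply (simp add: polyL0_def L0_pow[OF assms])
  by (simp add: Dg_def ev_compP[OF assms(2)])

definition dK :: "(nat \<Rightarrow> complex poly) \<Rightarrow> nat \<Rightarrow> fdist \<Rightarrow> fdist" where
  "dK P N c = (\<lambda>q. \<Sum>k\<le>N. (shift1 ^^ k) (compP (P k) c) q)"

lemma fin_dK: "finite (supp c) \<Longrightarrow> finite (supp (dK P N c))"
  unfolding dK_def by (rule fin_sum) (auto intro: fin_shift_pow fin_compP)

lemma flat_Dg:
  assumes "g \<in> kerL0 r a" "finite (supp c)"
  shows "flatapp r a P N (Dg c g) x = Dg (dK P N c) g x"
proof -
  have hol: "g holomorphic_on UNIV" using assms by (simp add: kerL0_def)
  have "flatapp r a P N (Dg c g) x = (\<Sum>k\<le>N. (deriv ^^ k) (Dg (compP (P k) c) g) x)"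
    by (simp add: flatapp_def polyL0_Dg[OF assms])
  also have "\<dots> = (\<Sum>k\<le>N. ev ((shift1 ^^ k) (compP (P k) c)) (\<lambda>j l. (deriv ^^ j) g (x + l)))"
    by (simp add: Dg_deriv[OF hol] ev_shift_pow[OF fin_compP[OF assms(2)]])
  also have "\<dots> = Dg (dK P N c) g x"
    unfolding dK_def Dg_def by (subst ev_sum) (auto intro: fin_shift_pow fin_compP assms(2))
  finally show ?thesis .
qed

lemma dapp_linG:
  assumes "finite I" "\<And>i. i \<in> I \<Longrightarrow> G i holomorphic_on UNIV"
  shows "dapp c (\<lambda>z. \<Sum>i\<in>I. s i * G i z) = (\<Sum>i\<in>I. s i * dapp c (G i))"
  by (simp add: dapp_ev hd_sum[OF assms] ev_linH[OF assms(1)])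

lemma dapp_zmult:
  assumes "G holomorphic_on UNIV" "finite (supp c)"
  shows "dapp c (\<lambda>z. z * G z) = dapp (mulz c) G"
  by (simp add: dapp_ev hd_zmult[OF assms(1)] ev_mulz[OF assms(2)])

lemma dapp_zpow:
  assumes "h holomorphic_on UNIV" "finite (supp c)"
  shows "dapp c (\<lambda>z. z ^ i * h z) = dapp ((mulz ^^ i) c) h"
  using assms(2)
proof (induction i arbitrary: c)
  case 0 thus ?case by simp
next
  case (Suc i)
  have hol: "(\<lambda>z. z ^ i * h z) holomorphic_on UNIV" using assms(1) by (intro holomorphic_intros)
  have "dapp c (\<lambda>z. z ^ Suc i * h z) = dapp c (\<lambda>z. z * (z ^ i * h z))" by (simp add: mult.assoc)
  also have "\<dots> = dapp (mulz c) (\<lambda>z. z ^ i * h z)" by (rule dapp_zmult[OF hol Suc.prems])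
  also have "\<dots> = dapp ((mulz ^^ i) (mulz c)) h" by (rule Suc.IH[OF fin_mulz[OF Suc.prems]])
  also have "\<dots> = dapp ((mulz ^^ Suc i) c) h" by (simp only: funpow_Suc_right o_apply)
  finally show ?case .
qed

lemma dapp_poly:
  assumes "h holomorphic_on UNIV" "finite (supp c)"
  shows "dapp c (\<lambda>z. poly p z * h z) = dapp (compP p c) h"
proof -
  have "(\<lambda>z. poly p z * h z) = (\<lambda>z. \<Sum>i\<le>degree p. coeff p i * (z ^ i * h z))"
    by (simp add: poly_altdef sum_distrib_right mult.assoc)
  hence "dapp c (\<lambda>z. poly p z * h z) = (\<Sum>i\<le>degree p. coeff p i * dapp c (\<lambda>z. z ^ i * h z))"
    using dapp_linG[of "{..degree p}" "\<lambda>i z. z ^ i * h z" c "coeff p"] assms(1)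
    by (simp add: holomorphic_intros)
  also have "\<dots> = dapp (compP p c) h"
    by (simp add: dapp_zpow[OF assms]) (simp add: dapp_ev ev_compP[OF assms(2)])
  finally show ?thesis .
qed

lemma opapp_dK:
  assumes "u holomorphic_on UNIV" "finite (supp c)"
  shows "dapp c (opapp P N u) = dapp (dK P N c) u"
proof -
  have hk: "(deriv ^^ k) u holomorphic_on UNIV" for k by (rule ent_hd[OF assms(1)])
  have "dapp c (opapp P N u) = dapp c (\<lambda>z. \<Sum>k\<le>N. 1 * (poly (P k) z * (deriv ^^ k) u z))"
    by (simp add: opapp_def)
  also have "\<dots> = (\<Sum>k\<le>N. 1 * dapp c (\<lambda>z. poly (P k) z * (deriv ^^ k) u z))"
    by (rule dapp_linG) (auto intro!: holomorphic_intros hk)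
  also have "\<dots> = (\<Sum>k\<le>N. dapp (compP (P k) c) ((deriv ^^ k) u))"
    by (simp add: dapp_poly[OF hk assms(2)])
  also have "\<dots> = (\<Sum>k\<le>N. ev ((shift1 ^^ k) (compP (P k) c)) (\<lambda>j l. (deriv ^^ j) u l))"
    by (simp add: dapp_ev ev_shift_pow[OF fin_compP[OF assms(2)]] funpow_add)
  also have "\<dots> = dapp (dK P N c) u"
    unfolding dK_def dapp_ev by (subst ev_sum) (auto intro: fin_shift_pow fin_compP assms(2))
  finally show ?thesis .
qed

lemma supp_empty: "supp e = {} \<Longrightarrow> e = (\<lambda>_. 0)"
  by (rule ext) (auto simp: supp_def)

lemma alg:
  fixes A :: "fdist \<Rightarrow> bool"
  assumes cl: "\<And>e \<mu>. A e \<Longrightarrow> A (\<lambda>q. mulz e q - \<mu> * e q)"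
  and single: "\<And>e \<mu>. A e \<Longrightarrow> supp e \<subseteq> {(\<mu>, 0)} \<Longrightarrow> e = (\<lambda>_. 0)"
  shows "finite L \<Longrightarrow> sum b L = n \<Longrightarrow> supp e \<subseteq> {p. fst p \<in> L \<and> snd p < b (fst p)} \<Longrightarrow> A e
     \<Longrightarrow> e = (\<lambda>_. 0)"
proof (induction n arbitrary: b e)
  case 0
  hence "\<forall>l\<in>L. b l = 0" by simp
  hence "supp e = {}" using 0 by auto
  thus ?case by (rule supp_empty)
next
  case (Suc n)
  obtain \<mu> where mu: "\<mu> \<in> L" "b \<mu> > 0"
    using Suc.prems(2) by (metis gr0I sum.neutral nat.distinct(1))
  define e' where "e' = (\<lambda>q. mulz e q - \<mu> * e q)"
  define b' where "b' = b(\<mu> := b \<mu> - 1)"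
  have e'v: "e' (l, j) = (l - \<mu>) * e (l, j) + of_nat (Suc j) * e (l, Suc j)" for l j
    by (simp add: e'_def mulz_def algebra_simps)
  have "sum b L = b \<mu> + sum b (L - {\<mu>})" using sum.remove[OF Suc.prems(1) mu(1)] .
  moreover have "sum b' L = b' \<mu> + sum b' (L - {\<mu>})" using sum.remove[OF Suc.prems(1) mu(1)] .
  moreover have "sum b' (L - {\<mu>}) = sum b (L - {\<mu>})" by (rule sum.cong) (auto simp: b'_def)
  ultimately have sb': "sum b' L = n" using Suc.prems(2) mu(2) by (simp add: b'_def)
  have se: "e (l, j) = 0" if "l \<notin> L \<or> j \<ge> b l" for l j
    using that Suc.prems(3) by (auto simp: supp_def)
  have supp': "supp e' \<subseteq> {p. fst p \<in> L \<and> snd p < b' (fst p)}"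
  proof
    fix q assume q: "q \<in> supp e'"
    obtain l j where lj: "q = (l, j)" by (cases q)
    show "q \<in> {p. fst p \<in> L \<and> snd p < b' (fst p)}"
    proof (cases "l = \<mu>")
      case True
      hence "e (\<mu>, Suc j) \<noteq> 0" using q e'v[of l j] lj by (auto simp: supp_def)
      hence "Suc j < b \<mu>" using se[of \<mu> "Suc j"] by (meson not_le)
      thus ?thesis using lj True mu by (auto simp: b'_def)
    next
      case False
      hence "e (l, j) \<noteq> 0 \<or> e (l, Suc j) \<noteq> 0" using q e'v[of l j] lj by (auto simp: supp_def)
      hence "l \<in> L \<and> j < b l" using se[of l j] se[of l "Suc j"] by (meson Suc_lessD not_le)
      thus ?thesis using lj False by (auto simp: b'_def)
    qed
  qed
  have "e' = (\<lambda>_. 0)"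
    by (rule Suc.IH[OF Suc.prems(1) sb' supp']) (simp add: e'_def cl Suc.prems(4))
  hence e'0: "(l - \<mu>) * e (l, j) + of_nat (Suc j) * e (l, Suc j) = 0" for l j
    using e'v[of l j] by simp
  have "supp e \<subseteq> {(\<mu>, 0)}"
  proof
    fix q assume q: "q \<in> supp e"
    obtain l j where lj: "q = (l, j)" by (cases q)
    show "q \<in> {(\<mu>, 0)}"
    proof (cases "l = \<mu>")
      case True
      show ?thesis
      proof (cases j)
        case 0 thus ?thesis using lj True by simp
      next
        case (Suc j')
        have "of_nat (Suc j') * e (\<mu>, Suc j') = 0" using e'0[of \<mu> j'] by simp
        hence "e (\<mu>, Suc j') = 0" by (simp del: of_nat_Suc)
        thus ?thesis using q lj True Suc by (simp add: supp_def)
      qed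
    next
      case False
      have "\<forall>j. b l \<le> j + d \<longrightarrow> e (l, j) = 0" for d
      proof (induction d)
        case 0 thus ?case using se by auto
      next
        case (Suc d)
        show ?case
        proof (intro allI impI)
          fix j assume "b l \<le> j + Suc d"
          hence "e (l, Suc j) = 0" using Suc.IH by auto
          hence "(l - \<mu>) * e (l, j) = 0" using e'0[of l j] by simp
          thus "e (l, j) = 0" using False by simp
        qed
      qed
      hence "e (l, j) = 0" by (metis le_add2)
      thus ?thesis using q lj by (simp add: supp_def)
    qed
  qed
  thus ?case by (rule single[OF Suc.prems(4)])
qed

lemma ent_shift: "g holomorphic_on UNIV \<Longrightarrow> (\<lambda>z. g (x + z)) holomorphic_on UNIV"
proof -
  assume g: "g holomorphic_on UNIV"
  have "(g \<circ> (\<lambda>z. x + z)) holomorphic_on UNIV"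
    by (rule holomorphic_on_compose) (auto intro: holomorphic_intros holomorphic_on_subset[OF g])
  thus ?thesis by (simp add: o_def)
qed

lemma L0_zero: "L0 r a (\<lambda>_. 0) x = 0"
  by (simp add: L0_def)

lemma ann_zero:
  assumes g0: "g0 \<in> kerL0 r a" "g0 x0 \<noteq> 0"
  and fin: "finite (supp e)"
  and ann: "\<forall>g\<in>kerL0 r a. \<forall>x. Dg e g x = 0"
  shows "e = (\<lambda>_. 0)"
proof -
  define A where "A e \<longleftrightarrow> finite (supp e) \<and> (\<forall>g\<in>kerL0 r a. \<forall>x. Dg e g x = 0)" for e
  have cl: "A (\<lambda>q. mulz e q - \<mu> * e q)" if "A e" for e \<mu>
  proof -
    have fe: "finite (supp e)" using that by (simp add: A_def)
    have fs: "finite (supp (\<lambda>q. (- \<mu>) * e q))"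
      by (rule finite_subset[OF _ fe]) (auto simp: supp_def)
    have eq: "(\<lambda>q. mulz e q - \<mu> * e q) = (\<lambda>q. mulz e q + (- \<mu>) * e q)" by simp
    have "finite (supp (\<lambda>q. mulz e q - \<mu> * e q))"
      unfolding eq by (rule finite_subset[OF _ finite_Un[THEN iffD2, OF conjI[OF fin_mulz[OF fe] fs]]])
        (auto simp: supp_def)
    moreover have "Dg (\<lambda>q. mulz e q - \<mu> * e q) g x = 0" if g: "g \<in> kerL0 r a" for g x
    proof -
      have z: "Dg e g = (\<lambda>_. 0)" using \<open>A e\<close> g by (auto simp: A_def)
      have "Dg (\<lambda>q. mulz e q - \<mu> * e q) g x = Dg (mulz e) g x + (- \<mu>) * Dg e g x"
        unfolding eq Dg_def ev_add[OF fin_mulz[OF fe] fs] ev_scale by (rule refl)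
      also have "\<dots> = L0 r a (Dg e g) x" by (simp only: L0_Dg[OF g fe]) (simp add: z)
      also have "\<dots> = 0" by (simp add: z L0_zero)
      finally show ?thesis .
    qed
    ultimately show ?thesis by (simp add: A_def)
  qed
  have single: "e = (\<lambda>_. 0)" if "A e" "supp e \<subseteq> {(\<mu>, 0)}" for e \<mu>
  proof -
    have "Dg e g0 (x0 - \<mu>) = e (\<mu>, 0) * g0 x0"
      unfolding Dg_def by (subst ev_superset[OF _ that(2)]) auto
    moreover have "Dg e g0 (x0 - \<mu>) = 0" using that(1) g0(1) by (simp add: A_def)
    ultimately have "e (\<mu>, 0) = 0" using g0(2) by simp
    hence "supp e = {}" using that(2) by (auto simp: supp_def)
    thus ?thesis by (rule supp_empty)
  qed
  obtain m where m: "supp e \<subseteq> fst ` supp e \<times> {..<Suc m}" using box fin by blast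
  show ?thesis
    by (rule alg[where A=A and L="fst ` supp e" and b="\<lambda>_. Suc m", OF cl single])
      (use fin m ann in \<open>auto simp: A_def\<close>)
qed

lemma f0_nonzero:
  assumes "r > 0" "\<forall>x. wronskian r f x = 1"
  shows "\<exists>x0. f 0 x0 \<noteq> 0"
proof (rule ccontr)
  assume "\<not> ?thesis"
  hence f0: "f 0 = (\<lambda>_. 0)" by auto
  have "wronskian r f 0 = 0"
    unfolding wronskian_def detm_def
  proof (rule sum.neutral, intro ballI)
    fix p assume "p \<in> {p. p permutes {..<r}}"
    hence pp: "p permutes {..<r}" by simp
    have "inv p 0 \<in> {..<r}" using permutes_in_image[OF permutes_inv[OF pp]] assms(1) by simp
    moreover have "p (inv p 0) = 0" using pp by (simp add: permutes_inverses(1))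
    ultimately have "(\<Prod>i<r. (deriv ^^ i) (f (p i)) 0) = 0"
      by (intro prod_zero) (auto intro!: bexI[of _ "inv p 0"] simp: f0)
    thus "of_int (sign p) * (\<Prod>i<r. (deriv ^^ i) (f (p i)) 0) = 0" by simp
  qed
  thus False using assms(2) by simp
qed

theorem mainTheorem8:
  fixes r n :: nat and a :: "nat \<Rightarrow> complex" and f :: "nat \<Rightarrow> complex \<Rightarrow> complex"
    and lam gam :: "nat \<Rightarrow> complex"
  assumes "r > 1" and "n \<ge> 1"
    and "inj_on lam {..<n}"
    and "\<forall>j<r. f j \<in> kerL0 r a"
    and "\<forall>x. wronskian r f x = 1"
  shows "{c \<in> Sdist. \<forall>g \<in> kerL0 r a. \<forall>x.
            flatapp r a (Kbar r f lam gam n) (r * n) (\<lambda>y. dapp c (\<lambda>z. g (y + z))) x = 0}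
       = {c \<in> Sdist. \<forall>u. u holomorphic_on UNIV \<longrightarrow>
            dapp c (opapp (Kbar r f lam gam n) (r * n) u) = 0}"
proof -
  let ?P = "Kbar r f lam gam n" and ?N = "r * n"
  have f0k: "f 0 \<in> kerL0 r a" using assms(1,4) by simp
  obtain x0 where x0: "f 0 x0 \<noteq> 0" using f0_nonzero[of r f] assms(1,5) by auto
  have eqv: "(\<forall>g \<in> kerL0 r a. \<forall>x. flatapp r a ?P ?N (\<lambda>y. dapp c (\<lambda>z. g (y + z))) x = 0)
      \<longleftrightarrow> (\<forall>u. u holomorphic_on UNIV \<longrightarrow> dapp c (opapp ?P ?N u) = 0)"
    if c: "finite (supp c)" for c
  proof -
    have l: "flatapp r a ?P ?N (\<lambda>y. dapp c (\<lambda>z. g (y + z))) x = dapp c (opapp ?P ?N (\<lambda>z. g (x + z)))"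
      if g: "g \<in> kerL0 r a" for g x
    proof -
      have hol: "g holomorphic_on UNIV" using g by (simp add: kerL0_def)
      have "(\<lambda>y. dapp c (\<lambda>z. g (y + z))) = Dg c g" by (rule ext) (rule dapp_shift[OF hol])
      hence "flatapp r a ?P ?N (\<lambda>y. dapp c (\<lambda>z. g (y + z))) x = Dg (dK ?P ?N c) g x"
        using flat_Dg[OF g c] by simp
      also have "\<dots> = dapp (dK ?P ?N c) (\<lambda>z. g (x + z))" by (rule dapp_shift[OF hol, symmetric])
      also have "\<dots> = dapp c (opapp ?P ?N (\<lambda>z. g (x + z)))"
        by (rule opapp_dK[OF ent_shift[OF hol] c, symmetric])
      finally show ?thesis .
    qed
    show ?thesis
    proof
      assume L: "\<forall>g \<in> kerL0 r a. \<forall>x. flatapp r a ?P ?N (\<lambda>y. dapp c (\<lambda>z. g (y + z))) x = 0"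
      have "\<forall>g\<in>kerL0 r a. \<forall>x. Dg (dK ?P ?N c) g x = 0"
      proof (intro ballI allI)
        fix g x assume g: "g \<in> kerL0 r a"
        have hol: "g holomorphic_on UNIV" using g by (simp add: kerL0_def)
        have "Dg (dK ?P ?N c) g x = dapp c (opapp ?P ?N (\<lambda>z. g (x + z)))"
          using dapp_shift[OF hol, of "dK ?P ?N c" x] opapp_dK[OF ent_shift[OF hol] c] by simp
        also have "\<dots> = 0" using L l[OF g] g by simp
        finally show "Dg (dK ?P ?N c) g x = 0" .
      qed
      hence z: "dK ?P ?N c = (\<lambda>_. 0)" by (rule ann_zero[OF f0k x0 fin_dK[OF c]])
      show "\<forall>u. u holomorphic_on UNIV \<longrightarrow> dapp c (opapp ?P ?N u) = 0"
      proof (intro allI impI)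
        fix u :: "complex \<Rightarrow> complex" assume "u holomorphic_on UNIV"
        hence "dapp c (opapp ?P ?N u) = dapp (\<lambda>_. 0) u" using opapp_dK[OF _ c, of u] z by simp
        thus "dapp c (opapp ?P ?N u) = 0" by (simp add: dapp_def)
      qed
    next
      assume R: "\<forall>u. u holomorphic_on UNIV \<longrightarrow> dapp c (opapp ?P ?N u) = 0"
      show "\<forall>g \<in> kerL0 r a. \<forall>x. flatapp r a ?P ?N (\<lambda>y. dapp c (\<lambda>z. g (y + z))) x = 0"
        using l R ent_shift by (auto simp: kerL0_def)
    qed
  qed
  show ?thesis
    using eqv by (auto simp: Sdist_def supp_def)
qed

end
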